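(* Let $\mathbb{F}$ be an algebraically closed field of characteristic different from $2$. There is no finite-dimensional nilpotent Lie algebra $L$ over $\mathbb{F}$ with $\dim L^{2}=3$, $\dim Z(L)=1$ and $s(L)=5$ such that $L/Z(L)\cong L_{5,8}\oplus A(2)$.
   Context: Schur multiplier: if $L\cong F/R$ with $F$ a free Lie algebra, then $\mathcal{M}(L)\cong (R\cap F^{2})/[R,F]$. For a non-abelian nilpotent Lie algebra $L$ of dimension $n$, $s(L)\ge0$ is defined by $\dim\mathcal{M}(L)=\frac12(n-1)(n-2)+1-s(L)$. $A(2)$ is the $2$-dimensional abelian Lie algebra. $L_{5,8}$ has basis $x_1,\dots,x_5$ with nonzero brackets $[x_1,x_2]=x_4$, $[x_1,x_3]=x_5$. *)

theory Defs
  imports "HOL-Library.Function_Algebras" "HOL-Computational_Algebra.Polynomial"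
begin

text \<open>Vectors are functions from an index type to the field; addition, zero and
  negation are pointwise (Function_Algebras); scalar multiplication is sc.\<close>

definition sc :: "'a::field \<Rightarrow> ('i \<Rightarrow> 'a) \<Rightarrow> ('i \<Rightarrow> 'a)" where
  "sc c x = (\<lambda>i. c * x i)"

definition ev :: "'i \<Rightarrow> ('i \<Rightarrow> 'a::field)" where
  "ev k = (\<lambda>i. if i = k then 1 else 0)"

definition span_of :: "('i \<Rightarrow> 'a::field) set \<Rightarrow> ('i \<Rightarrow> 'a) set" where
  "span_of S = {v. \<exists>T u. finite T \<and> T \<subseteq> S \<and> v = (\<Sum>x\<in>T. sc (u x) x)}"

definition indep_mod :: "('i \<Rightarrow> 'a::field) set \<Rightarrow> ('i \<Rightarrow> 'a) set \<Rightarrow> bool" where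
  "indep_mod W B \<longleftrightarrow> (\<forall>T u. finite T \<longrightarrow> T \<subseteq> B \<longrightarrow>
      (\<Sum>x\<in>T. sc (u x) x) \<in> span_of W \<longrightarrow> (\<forall>x\<in>T. u x = 0))"

text \<open>The quotient space U/W (W a subspace of the subspace U) has dimension d:
  there are d elements of U forming a basis of U modulo W.\<close>
definition has_quot_dim :: "('i \<Rightarrow> 'a::field) set \<Rightarrow> ('i \<Rightarrow> 'a) set \<Rightarrow> nat \<Rightarrow> bool" where
  "has_quot_dim U W d \<longleftrightarrow> (\<exists>B. finite B \<and> card B = d \<and> B \<subseteq> U \<and> indep_mod W B \<and>
      U \<subseteq> span_of (B \<union> W))"

definition has_dim :: "('i \<Rightarrow> 'a::field) set \<Rightarrow> nat \<Rightarrow> bool" where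
  "has_dim U d \<longleftrightarrow> has_quot_dim U {} d"

definition lie_algebra :: "('i \<Rightarrow> 'a::field) set \<Rightarrow> (('i \<Rightarrow> 'a) \<Rightarrow> ('i \<Rightarrow> 'a) \<Rightarrow> ('i \<Rightarrow> 'a)) \<Rightarrow> bool" where
  "lie_algebra V br \<longleftrightarrow> span_of V = V \<and>
     (\<forall>x\<in>V. \<forall>y\<in>V. br x y \<in> V) \<and>
     (\<forall>x\<in>V. \<forall>y\<in>V. \<forall>z\<in>V. \<forall>a b.
         br (sc a x + sc b y) z = sc a (br x z) + sc b (br y z) \<and>
         br z (sc a x + sc b y) = sc a (br z x) + sc b (br z y)) \<and>
     (\<forall>x\<in>V. br x x = 0) \<and>
     (\<forall>x\<in>V. \<forall>y\<in>V. \<forall>z\<in>V. br x (br y z) + br y (br z x) + br z (br x y) = 0)"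

definition brk_span :: "(('i \<Rightarrow> 'a::field) \<Rightarrow> ('i \<Rightarrow> 'a) \<Rightarrow> ('i \<Rightarrow> 'a)) \<Rightarrow> ('i \<Rightarrow> 'a) set \<Rightarrow> ('i \<Rightarrow> 'a) set \<Rightarrow> ('i \<Rightarrow> 'a) set" where
  "brk_span br A B = span_of {br a b | a b. a \<in> A \<and> b \<in> B}"

definition center :: "('i \<Rightarrow> 'a::field) set \<Rightarrow> (('i \<Rightarrow> 'a) \<Rightarrow> ('i \<Rightarrow> 'a) \<Rightarrow> ('i \<Rightarrow> 'a)) \<Rightarrow> ('i \<Rightarrow> 'a) set" where
  "center V br = {z \<in> V. \<forall>x\<in>V. br z x = 0}"

text \<open>Lower central series L^1 = L, L^(k+1) = [L^k, L] (indexed from 0 here).\<close>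
primrec lcs :: "('i \<Rightarrow> 'a::field) set \<Rightarrow> (('i \<Rightarrow> 'a) \<Rightarrow> ('i \<Rightarrow> 'a) \<Rightarrow> ('i \<Rightarrow> 'a)) \<Rightarrow> nat \<Rightarrow> ('i \<Rightarrow> 'a) set" where
  "lcs V br 0 = V"
| "lcs V br (Suc k) = brk_span br (lcs V br k) V"

definition nilpotent_lie :: "('i \<Rightarrow> 'a::field) set \<Rightarrow> (('i \<Rightarrow> 'a) \<Rightarrow> ('i \<Rightarrow> 'a) \<Rightarrow> ('i \<Rightarrow> 'a)) \<Rightarrow> bool" where
  "nilpotent_lie V br \<longleftrightarrow> (\<exists>k. lcs V br k = {0})"

definition lie_hom :: "('i \<Rightarrow> 'a::field) set \<Rightarrow> (('i \<Rightarrow> 'a) \<Rightarrow> ('i \<Rightarrow> 'a) \<Rightarrow> ('i \<Rightarrow> 'a))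
    \<Rightarrow> ('j \<Rightarrow> 'a) set \<Rightarrow> (('j \<Rightarrow> 'a) \<Rightarrow> ('j \<Rightarrow> 'a) \<Rightarrow> ('j \<Rightarrow> 'a))
    \<Rightarrow> (('i \<Rightarrow> 'a) \<Rightarrow> ('j \<Rightarrow> 'a)) \<Rightarrow> bool" where
  "lie_hom V1 br1 V2 br2 \<phi> \<longleftrightarrow> (\<forall>x\<in>V1. \<phi> x \<in> V2) \<and>
     (\<forall>x\<in>V1. \<forall>y\<in>V1. \<forall>a b. \<phi> (sc a x + sc b y) = sc a (\<phi> x) + sc b (\<phi> y)) \<and>
     (\<forall>x\<in>V1. \<forall>y\<in>V1. \<phi> (br1 x y) = br2 (\<phi> x) (\<phi> y))"

text \<open>L/I is isomorphic to K (I an ideal of L): there is a surjective Lie homomorphism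
  L -> K with kernel exactly I (first isomorphism theorem).\<close>
definition quotient_iso :: "('i \<Rightarrow> 'a::field) set \<Rightarrow> (('i \<Rightarrow> 'a) \<Rightarrow> ('i \<Rightarrow> 'a) \<Rightarrow> ('i \<Rightarrow> 'a))
    \<Rightarrow> ('i \<Rightarrow> 'a) set \<Rightarrow> ('j \<Rightarrow> 'a) set \<Rightarrow> (('j \<Rightarrow> 'a) \<Rightarrow> ('j \<Rightarrow> 'a) \<Rightarrow> ('j \<Rightarrow> 'a)) \<Rightarrow> bool" where
  "quotient_iso V br I K brK \<longleftrightarrow> (\<exists>\<phi>. lie_hom V br K brK \<phi> \<and> \<phi> ` V = K \<and>
      {x \<in> V. \<phi> x = 0} = I)"

definition lie_sum_carrier :: "('i \<Rightarrow> 'a::field) set \<Rightarrow> ('j \<Rightarrow> 'a) set \<Rightarrow> ('i + 'j \<Rightarrow> 'a) set" where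
  "lie_sum_carrier V1 V2 = {f. (f \<circ> Inl) \<in> V1 \<and> (f \<circ> Inr) \<in> V2}"

definition lie_sum_br :: "(('i \<Rightarrow> 'a::field) \<Rightarrow> ('i \<Rightarrow> 'a) \<Rightarrow> ('i \<Rightarrow> 'a)) \<Rightarrow> (('j \<Rightarrow> 'a) \<Rightarrow> ('j \<Rightarrow> 'a) \<Rightarrow> ('j \<Rightarrow> 'a))
    \<Rightarrow> ('i + 'j \<Rightarrow> 'a) \<Rightarrow> ('i + 'j \<Rightarrow> 'a) \<Rightarrow> ('i + 'j \<Rightarrow> 'a)" where
  "lie_sum_br br1 br2 f g = (\<lambda>k. case k of
       Inl i \<Rightarrow> br1 (f \<circ> Inl) (g \<circ> Inl) i
     | Inr j \<Rightarrow> br2 (f \<circ> Inr) (g \<circ> Inr) j)"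

text \<open>L_{5,8}: basis x_1..x_5 = ev 1 .. ev 5, nonzero brackets [x1,x2]=x4, [x1,x3]=x5
  (bracket given by bilinear extension).\<close>
definition L58 :: "(nat \<Rightarrow> 'a::field) set" where
  "L58 = span_of {ev 1, ev 2, ev 3, ev 4, ev 5}"

definition L58_br :: "(nat \<Rightarrow> 'a::field) \<Rightarrow> (nat \<Rightarrow> 'a) \<Rightarrow> (nat \<Rightarrow> 'a)" where
  "L58_br x y = sc (x 1 * y 2 - x 2 * y 1) (ev 4) + sc (x 1 * y 3 - x 3 * y 1) (ev 5)"

definition A2 :: "(nat \<Rightarrow> 'a::field) set" where
  "A2 = span_of {ev 1, ev 2}"

definition A2_br :: "(nat \<Rightarrow> 'a::field) \<Rightarrow> (nat \<Rightarrow> 'a) \<Rightarrow> (nat \<Rightarrow> 'a)" where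
  "A2_br x y = 0"

text \<open>Free associative algebra on generators indexed by nat: noncommutative
  polynomials as coefficient functions on words. Product and commutator.\<close>
definition nc_mult :: "(nat list \<Rightarrow> 'a::field) \<Rightarrow> (nat list \<Rightarrow> 'a) \<Rightarrow> (nat list \<Rightarrow> 'a)" where
  "nc_mult p q = (\<lambda>w. \<Sum>k\<le>length w. p (take k w) * q (drop k w))"

definition nc_comm :: "(nat list \<Rightarrow> 'a::field) \<Rightarrow> (nat list \<Rightarrow> 'a) \<Rightarrow> (nat list \<Rightarrow> 'a)" where
  "nc_comm p q = nc_mult p q - nc_mult q p"

text \<open>The free Lie algebra on countably many generators x_i: the Lie subalgebra of the
  free associative algebra generated by the letters (Witt's construction).\<close>
inductive_set free_lie :: "(nat list \<Rightarrow> 'a::field) set" where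
  gen: "ev [i] \<in> free_lie"
| zero: "0 \<in> free_lie"
| add: "x \<in> free_lie \<Longrightarrow> y \<in> free_lie \<Longrightarrow> x + y \<in> free_lie"
| smult: "x \<in> free_lie \<Longrightarrow> sc c x \<in> free_lie"
| comm: "x \<in> free_lie \<Longrightarrow> y \<in> free_lie \<Longrightarrow> nc_comm x y \<in> free_lie"

text \<open>dim M(L) = d, via Hopf's formula M(L) = (R \<inter> F^2)/[R,F] for a free presentation
  L = F/R, where F is the free Lie algebra and R the kernel of the presentation.\<close>
definition schur_mult_dim :: "('i \<Rightarrow> 'a::field) set \<Rightarrow> (('i \<Rightarrow> 'a) \<Rightarrow> ('i \<Rightarrow> 'a) \<Rightarrow> ('i \<Rightarrow> 'a)) \<Rightarrow> nat \<Rightarrow> bool" where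
  "schur_mult_dim V br d \<longleftrightarrow> (\<exists>\<pi>. lie_hom free_lie nc_comm V br \<pi> \<and> \<pi> ` free_lie = V \<and>
     (let R = {p \<in> free_lie. \<pi> p = 0} in
      has_quot_dim (R \<inter> brk_span nc_comm free_lie free_lie) (brk_span nc_comm R free_lie) d))"

definition s_inv_eq :: "('i \<Rightarrow> 'a::field) set \<Rightarrow> (('i \<Rightarrow> 'a) \<Rightarrow> ('i \<Rightarrow> 'a) \<Rightarrow> ('i \<Rightarrow> 'a)) \<Rightarrow> int \<Rightarrow> bool" where
  "s_inv_eq V br s \<longleftrightarrow> (\<exists>n d. has_dim V n \<and> schur_mult_dim V br d \<and>
      int d = int ((n - 1) * (n - 2) div 2) + 1 - s)"

end

theory Submission
  imports Defs
begin


interpretation vs: vector_space "sc :: 'a::field \<Rightarrow> ('i \<Rightarrow> 'a) \<Rightarrow> ('i \<Rightarrow> 'a)"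
  by unfold_locales (auto simp: sc_def fun_eq_iff algebra_simps)

lemma span_of_eq: "span_of S = vs.span S"
  unfolding span_of_def vs.span_explicit by auto

lemma sc_simps[simp]: "sc 1 x = x" "sc 0 x = 0" "sc a 0 = 0" "sc a (sc b x) = sc (a*b) x"
  by (auto simp: sc_def fun_eq_iff)

lemma nc_mult_add_left: "nc_mult (p + q) r = nc_mult p r + nc_mult q r"
  by (auto simp: nc_mult_def fun_eq_iff algebra_simps sum.distrib)
lemma nc_mult_add_right: "nc_mult r (p + q) = nc_mult r p + nc_mult r q"
  by (auto simp: nc_mult_def fun_eq_iff algebra_simps sum.distrib)
lemma nc_mult_sc_left: "nc_mult (sc c p) r = sc c (nc_mult p r)"
  by (auto simp: nc_mult_def fun_eq_iff sc_def sum_distrib_left algebra_simps)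
lemma nc_mult_sc_right: "nc_mult r (sc c p) = sc c (nc_mult r p)"
  by (auto simp: nc_mult_def fun_eq_iff sc_def sum_distrib_left algebra_simps)
lemma nc_mult_diff_left: "nc_mult (p - q) r = nc_mult p r - nc_mult q r"
  by (auto simp: nc_mult_def fun_eq_iff algebra_simps sum_subtractf)
lemma nc_mult_diff_right: "nc_mult r (p - q) = nc_mult r p - nc_mult r q"
  by (auto simp: nc_mult_def fun_eq_iff algebra_simps sum_subtractf)

lemma nc_mult_assoc: "nc_mult (nc_mult p q) r = nc_mult p (nc_mult q r)"
proof (rule ext)
  fix w :: "nat list"
  define n where "n = length w"
  have "nc_mult (nc_mult p q) r w =
     (\<Sum>k\<le>n. \<Sum>j\<le>k. p (take j w) * q (take (k-j) (drop j w)) * r (drop k w))"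
    unfolding nc_mult_def n_def
    by (intro sum.cong refl) (auto simp: sum_distrib_right min_def take_drop)
  also have "\<dots> = (\<Sum>j\<le>n. \<Sum>k\<in>{j..n}. p (take j w) * q (take (k-j) (drop j w)) * r (drop k w))"
  proof -
    let ?f = "\<lambda>k j. p (take j w) * q (take (k-j) (drop j w)) * r (drop k w)"
    have "(\<Sum>k\<le>n. \<Sum>j\<le>k. ?f k j) = (\<Sum>k\<in>{..n}. \<Sum>j\<in>{j. j \<in> {..n} \<and> j \<le> k}. ?f k j)"
      by (intro sum.cong refl) auto
    also have "\<dots> = (\<Sum>j\<in>{..n}. \<Sum>k\<in>{k. k \<in> {..n} \<and> j \<le> k}. ?f k j)"
      by (rule sum.swap_restrict) auto
    also have "\<dots> = (\<Sum>j\<le>n. \<Sum>k\<in>{j..n}. ?f k j)"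
      by (intro sum.cong refl) auto
    finally show ?thesis .
  qed
  also have "\<dots> = (\<Sum>j\<le>n. \<Sum>m\<le>n-j. p (take j w) * q (take m (drop j w)) * r (drop (j+m) w))"
  proof (rule sum.cong[OF refl])
    fix j assume "j \<in> {..n}"
    show "(\<Sum>k\<in>{j..n}. p (take j w) * q (take (k-j) (drop j w)) * r (drop k w)) =
          (\<Sum>m\<le>n-j. p (take j w) * q (take m (drop j w)) * r (drop (j+m) w))"
      using \<open>j \<in> {..n}\<close>
      by (intro sum.reindex_bij_witness[where i="\<lambda>m. m + j" and j="\<lambda>k. k - j"]) auto
  qed
  also have "\<dots> = nc_mult p (nc_mult q r) w"
    unfolding nc_mult_def n_def
    by (intro sum.cong refl) (auto simp: sum_distrib_left algebra_simps add.commute)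
  finally show "nc_mult (nc_mult p q) r w = nc_mult p (nc_mult q r) w" .
qed


lemma nc_comm_add_left: "nc_comm (p + q) r = nc_comm p r + nc_comm q r"
  by (simp add: nc_comm_def nc_mult_add_left nc_mult_add_right)
lemma nc_comm_add_right: "nc_comm r (p + q) = nc_comm r p + nc_comm r q"
  by (simp add: nc_comm_def nc_mult_add_left nc_mult_add_right)
lemma nc_comm_sc_left: "nc_comm (sc c p) r = sc c (nc_comm p r)"
  by (simp add: nc_comm_def nc_mult_sc_left nc_mult_sc_right vs.scale_right_diff_distrib)
lemma nc_comm_sc_right: "nc_comm r (sc c p) = sc c (nc_comm r p)"
  by (simp add: nc_comm_def nc_mult_sc_left nc_mult_sc_right vs.scale_right_diff_distrib)
lemma nc_comm_diff_left: "nc_comm (p - q) r = nc_comm p r - nc_comm q r"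
  by (simp add: nc_comm_def nc_mult_diff_left nc_mult_diff_right)
lemma nc_comm_diff_right: "nc_comm r (p - q) = nc_comm r p - nc_comm r q"
  by (simp add: nc_comm_def nc_mult_diff_left nc_mult_diff_right)
lemma nc_comm_anti: "nc_comm q p = - nc_comm p q"
  by (simp add: nc_comm_def)
lemma nc_comm_self[simp]: "nc_comm p p = 0"
  by (simp add: nc_comm_def)
lemma nc_comm_neg_left: "nc_comm (- p) r = - nc_comm p r"
  using nc_comm_diff_left[of 0 p r] by (simp add: nc_comm_def nc_mult_def fun_eq_iff)
lemma nc_comm_zero[simp]: "nc_comm 0 r = 0" "nc_comm r 0 = 0"
  by (simp_all add: nc_comm_def nc_mult_def fun_eq_iff)

lemma nc_jacobi: "nc_comm (nc_comm a b) c + nc_comm (nc_comm b c) a + nc_comm (nc_comm c a) b = 0"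
  unfolding nc_comm_def nc_mult_diff_left nc_mult_diff_right nc_mult_assoc
  by (simp add: algebra_simps)

lemma free_lie_subspace: "vs.subspace free_lie"
  unfolding vs.subspace_def by (auto intro: free_lie.intros)

lemma span_free_lie_sub: "S \<subseteq> free_lie \<Longrightarrow> vs.span S \<subseteq> free_lie"
  using vs.span_minimal free_lie_subspace by blast

lemma span_of_empty: "span_of {} = {0}"
  by (simp add: span_of_eq)

lemma indep_mod_card:
  fixes X :: "('i \<Rightarrow> 'a::field) set"
  assumes fX: "finite X" and ind: "indep_mod W X" and fT: "finite T"
    and sub: "X \<subseteq> vs.span (T \<union> W)"
  shows "card X \<le> card T"
proof -
  have "\<exists>W'. finite W' \<and> W' \<subseteq> W \<and> Y \<subseteq> vs.span (T \<union> W')" if "finite Y" "Y \<subseteq> X" for Y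
    using that
  proof (induction Y rule: finite_induct)
    case empty then show ?case by (intro exI[of _ "{}"]) auto
  next
    case (insert x Y)
    then obtain W1 where W1: "finite W1" "W1 \<subseteq> W" "Y \<subseteq> vs.span (T \<union> W1)" by auto
    have "x \<in> vs.span (T \<union> W)" using insert sub by auto
    then obtain S u where S: "finite S" "S \<subseteq> T \<union> W" "x = (\<Sum>a\<in>S. sc (u a) a)"
      unfolding vs.span_explicit by auto
    have "x \<in> vs.span (T \<union> (W1 \<union> (S \<inter> W)))"
      unfolding S(3) by (intro vs.span_sum vs.span_scale vs.span_base) (use S in auto)
    moreover have "Y \<subseteq> vs.span (T \<union> (W1 \<union> (S \<inter> W)))"
      using W1(3) vs.span_mono[of "T \<union> W1" "T \<union> (W1 \<union> (S \<inter> W))"] by auto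
    ultimately show ?case using W1 S by (intro exI[of _ "W1 \<union> (S \<inter> W)"]) auto
  qed
  from this[OF fX] obtain W' where W': "finite W'" "W' \<subseteq> W" "X \<subseteq> vs.span (T \<union> W')" by auto
  obtain B where B: "B \<subseteq> W'" "vs.independent B" "W' \<subseteq> vs.span B"
    using vs.maximal_independent_subset by blast
  have fB: "finite B" using B W' finite_subset by blast
  have spW: "vs.span W = span_of W" by (simp add: span_of_eq)
  have BW: "vs.span B \<subseteq> vs.span W" using B W' vs.span_mono by blast
  have disj: "X \<inter> B = {}"
  proof (rule ccontr)
    assume "X \<inter> B \<noteq> {}"
    then obtain x where x: "x \<in> X" "x \<in> B" by auto
    have "x \<in> W" using x B W' by auto
    then have "(\<Sum>y\<in>{x}. sc ((\<lambda>_. 1::'a) y) y) \<in> span_of W"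
      using vs.span_base[of x W] unfolding span_of_eq by simp
    then have "\<forall>y\<in>{x}. (\<lambda>_. 1::'a) y = 0"
      using ind[unfolded indep_mod_def, rule_format, of "{x}" "\<lambda>_. 1"] x by simp
    then show False by simp
  qed
  have indXB: "vs.independent (X \<union> B)"
  proof -
    have "\<not> vs.dependent (X \<union> B)"
    proof
      assume "vs.dependent (X \<union> B)"
      then obtain u where u: "\<exists>v\<in>X \<union> B. u v \<noteq> 0" "(\<Sum>v\<in>X \<union> B. sc (u v) v) = 0"
        using vs.dependent_finite[of "X \<union> B"] fX fB by auto
      have split: "(\<Sum>v\<in>X \<union> B. sc (u v) v) = (\<Sum>v\<in>X. sc (u v) v) + (\<Sum>v\<in>B. sc (u v) v)"
        using disj fX fB by (simp add: sum.union_disjoint)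
      have "(\<Sum>v\<in>X. sc (u v) v) = - (\<Sum>v\<in>B. sc (u v) v)"
        using u(2) split by (simp add: eq_neg_iff_add_eq_0)
      also have "\<dots> \<in> vs.span B"
        by (intro vs.span_neg vs.span_sum vs.span_scale vs.span_base) auto
      finally have "(\<Sum>v\<in>X. sc (u v) v) \<in> span_of W" using BW spW by auto
      then have uX: "\<forall>v\<in>X. u v = 0" using ind fX unfolding indep_mod_def by auto
      then have "(\<Sum>v\<in>X. sc (u v) v) = 0" by simp
      then have "(\<Sum>v\<in>B. sc (u v) v) = 0" using u(2) split by simp
      then have "\<forall>v\<in>B. u v = 0" using B(2) fB vs.dependent_finite[of B] by auto
      with uX u(1) show False by auto
    qed
    then show ?thesis by simp
  qed
  have "X \<union> B \<subseteq> vs.span (T \<union> B)"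
  proof -
    have "T \<union> W' \<subseteq> vs.span (T \<union> B)"
      using B(3) vs.span_mono[of B "T \<union> B"] vs.span_superset[of "T \<union> B"] by auto
    then have "vs.span (T \<union> W') \<subseteq> vs.span (T \<union> B)"
      using vs.span_minimal vs.subspace_span by blast
    then show ?thesis using W'(3) vs.span_superset[of "T \<union> B"] by auto
  qed
  then have "card (X \<union> B) \<le> card (T \<union> B)"
    using vs.independent_span_bound[OF _ indXB] fT fB by auto
  also have "\<dots> \<le> card T + card B" by (rule card_Un_le)
  finally show ?thesis using card_Un_disjoint[OF fX fB disj] by simp
qed




abbreviation "KK \<equiv> lie_sum_carrier (L58::(nat \<Rightarrow> 'a::field) set) (A2::(nat \<Rightarrow> 'a) set)"
abbreviation "brK \<equiv> lie_sum_br (L58_br::(nat \<Rightarrow> 'a::field) \<Rightarrow> _) (A2_br::(nat \<Rightarrow> 'a) \<Rightarrow> _)"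

lemma sc_m1[simp]: "sc (-1) x = - x"
  by (simp add: sc_def fun_eq_iff)

definition EL :: "nat \<Rightarrow> nat + nat \<Rightarrow> 'a::field" where "EL k = (\<lambda>s. if s = Inl k then 1 else 0)"
definition ER :: "nat \<Rightarrow> nat + nat \<Rightarrow> 'a::field" where "ER k = (\<lambda>s. if s = Inr k then 1 else 0)"

lemma brK_formula: "brK f g = (\<lambda>s. case s of
    Inl i \<Rightarrow> (f (Inl 1) * g (Inl 2) - f (Inl 2) * g (Inl 1)) * ev 4 i
           + (f (Inl 1) * g (Inl 3) - f (Inl 3) * g (Inl 1)) * ev 5 i
  | Inr j \<Rightarrow> 0)"
  by (auto simp: lie_sum_br_def L58_br_def A2_br_def sc_def fun_eq_iff split: sum.splits)

lemma span_vanish: fixes g :: "'i \<Rightarrow> 'a::field" shows "g \<in> vs.span S \<Longrightarrow> (\<forall>s\<in>S. s i = 0) \<Longrightarrow> g i = 0"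
proof -
  assume a: "g \<in> vs.span S" "\<forall>s\<in>S. s i = 0"
  have "vs.subspace {h::'i \<Rightarrow> 'a. h i = 0}"
    by (auto simp: vs.subspace_def sc_def)
  moreover have "S \<subseteq> {h::'i \<Rightarrow> 'a. h i = 0}" using a(2) by auto
  ultimately have "vs.span S \<subseteq> {h::'i \<Rightarrow> 'a. h i = 0}" using vs.span_minimal by blast
  then show ?thesis using a(1) by auto
qed

lemma EL_in: "k \<in> {1..5} \<Longrightarrow> (EL k :: nat + nat \<Rightarrow> 'a::field) \<in> KK"
proof -
  assume "k \<in> {1..5}"
  then have k: "k = 1 \<or> k = 2 \<or> k = 3 \<or> k = 4 \<or> k = 5" by auto
  have "(EL k :: nat + nat \<Rightarrow> 'a) \<circ> Inl = ev k" by (auto simp: EL_def ev_def fun_eq_iff)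
  moreover have "ev k \<in> (L58 :: (nat \<Rightarrow> 'a) set)"
    unfolding L58_def span_of_eq using k by (intro vs.span_base) auto
  moreover have "(EL k :: nat + nat \<Rightarrow> 'a) \<circ> Inr = 0" by (auto simp: EL_def fun_eq_iff)
  moreover have "(0::nat \<Rightarrow> 'a) \<in> A2" unfolding A2_def span_of_eq by (rule vs.span_zero)
  ultimately show ?thesis unfolding lie_sum_carrier_def by simp
qed

lemma ER_in: "k \<in> {1,2} \<Longrightarrow> (ER k :: nat + nat \<Rightarrow> 'a::field) \<in> KK"
proof -
  assume k: "k \<in> {1,2}"
  have "(ER k :: nat + nat \<Rightarrow> 'a) \<circ> Inr = ev k" by (auto simp: ER_def ev_def fun_eq_iff)
  moreover have "ev k \<in> (A2 :: (nat \<Rightarrow> 'a) set)"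
    unfolding A2_def span_of_eq using k by (intro vs.span_base) auto
  moreover have "(ER k :: nat + nat \<Rightarrow> 'a) \<circ> Inl = 0" by (auto simp: ER_def fun_eq_iff)
  moreover have "(0::nat \<Rightarrow> 'a) \<in> L58" unfolding L58_def span_of_eq by (rule vs.span_zero)
  ultimately show ?thesis unfolding lie_sum_carrier_def by simp
qed

lemma KK_decomp:
  assumes f: "f \<in> (KK :: (nat + nat \<Rightarrow> 'a::field) set)"
  shows "f = sc (f (Inl 1)) (EL 1) + sc (f (Inl 2)) (EL 2) + sc (f (Inl 3)) (EL 3) + sc (f (Inl 4)) (EL 4)
     + sc (f (Inl 5)) (EL 5) + sc (f (Inr 1)) (ER 1) + sc (f (Inr 2)) (ER 2)"
proof -
  have l: "f \<circ> Inl \<in> vs.span {ev 1, ev 2, ev 3, ev 4, ev 5}" and r: "f \<circ> Inr \<in> vs.span {ev 1, ev 2}"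
    using f unfolding lie_sum_carrier_def L58_def A2_def span_of_eq by auto
  have l0: "i \<notin> {1..5} \<Longrightarrow> f (Inl i) = 0" for i
    using span_vanish[OF l, of i] by (auto simp: ev_def)
  have r0: "i \<notin> {1,2} \<Longrightarrow> f (Inr i) = 0" for i
    using span_vanish[OF r, of i] by (auto simp: ev_def)
  show ?thesis
  proof (rule ext)
    fix s show "f s = (sc (f (Inl 1)) (EL 1) + sc (f (Inl 2)) (EL 2) + sc (f (Inl 3)) (EL 3) + sc (f (Inl 4)) (EL 4)
     + sc (f (Inl 5)) (EL 5) + sc (f (Inr 1)) (ER 1) + sc (f (Inr 2)) (ER 2)) s"
    proof (cases s)
      case (Inl i)
      then show ?thesis using l0[of i]
        by (cases "i = 1"; cases "i = 2"; cases "i = 3"; cases "i = 4"; cases "i = 5")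
           (auto simp: EL_def ER_def sc_def)
    next
      case (Inr i)
      then show ?thesis using r0[of i]
        by (cases "i = 1"; cases "i = 2") (auto simp: EL_def ER_def sc_def)
    qed
  qed
qed

lemma brK_zero1: "f (Inl 1) = 0 \<Longrightarrow> g (Inl 1) = 0 \<Longrightarrow> brK f g = 0"
  by (simp add: brK_formula fun_eq_iff split: sum.split)
lemma brK_zero2: "f (Inl 2) = 0 \<Longrightarrow> g (Inl 2) = 0 \<Longrightarrow> f (Inl 3) = 0 \<Longrightarrow> g (Inl 3) = 0 \<Longrightarrow> brK f g = 0"
  by (simp add: brK_formula fun_eq_iff split: sum.split)

locale LS =
  fixes V :: "('i \<Rightarrow> 'a::field) set"
    and br :: "('i \<Rightarrow> 'a) \<Rightarrow> ('i \<Rightarrow> 'a) \<Rightarrow> ('i \<Rightarrow> 'a)"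
    and \<phi> :: "('i \<Rightarrow> 'a) \<Rightarrow> (nat + nat \<Rightarrow> 'a)"
    and \<pi> :: "(nat list \<Rightarrow> 'a) \<Rightarrow> ('i \<Rightarrow> 'a)"
  assumes lie: "lie_algebra V br"
    and phom: "lie_hom V br KK brK \<phi>"
    and psurj: "\<phi> ` V = KK"
    and pker: "{x \<in> V. \<phi> x = 0} = center V br"
    and cdim: "has_dim (center V br) 1"
    and pihom: "lie_hom free_lie nc_comm V br \<pi>"
    and pisurj: "\<pi> ` free_lie = V"
    and two: "(2::'a) \<noteq> 0"
begin

lemma Vsub: "vs.subspace V"
  using lie unfolding lie_algebra_def span_of_eq by (metis vs.subspace_span)

lemma V0[simp]: "0 \<in> V" using Vsub vs.subspace_0 by blast
lemma Vadd[simp]: "x \<in> V \<Longrightarrow> y \<in> V \<Longrightarrow> x + y \<in> V" using Vsub vs.subspace_add by blast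
lemma Vsc[simp]: "x \<in> V \<Longrightarrow> sc a x \<in> V" using Vsub vs.subspace_scale by blast
lemma Vdiff[simp]: "x \<in> V \<Longrightarrow> y \<in> V \<Longrightarrow> x - y \<in> V" using Vsub vs.subspace_diff by blast
lemma Vneg[simp]: "x \<in> V \<Longrightarrow> - x \<in> V" using Vsub vs.subspace_neg by blast
lemma Vspan: "S \<subseteq> V \<Longrightarrow> vs.span S \<subseteq> V" using Vsub vs.span_minimal by blast

lemma br_in[simp]: "x \<in> V \<Longrightarrow> y \<in> V \<Longrightarrow> br x y \<in> V"
  using lie unfolding lie_algebra_def by blast

lemma br_lin: "x \<in> V \<Longrightarrow> y \<in> V \<Longrightarrow> z \<in> V \<Longrightarrow>
    br (sc a x + sc b y) z = sc a (br x z) + sc b (br y z) \<and>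
    br z (sc a x + sc b y) = sc a (br z x) + sc b (br z y)"
  using lie unfolding lie_algebra_def by blast

lemma br_add_left: "x \<in> V \<Longrightarrow> y \<in> V \<Longrightarrow> z \<in> V \<Longrightarrow> br (x + y) z = br x z + br y z"
  using br_lin[of x y z 1 1] by simp
lemma br_add_right: "x \<in> V \<Longrightarrow> y \<in> V \<Longrightarrow> z \<in> V \<Longrightarrow> br z (x + y) = br z x + br z y"
  using br_lin[of x y z 1 1] by simp
lemma br_sc_left: "x \<in> V \<Longrightarrow> z \<in> V \<Longrightarrow> br (sc a x) z = sc a (br x z)"
  using br_lin[of x x z a 0] by simp
lemma br_sc_right: "x \<in> V \<Longrightarrow> z \<in> V \<Longrightarrow> br z (sc a x) = sc a (br z x)"
  using br_lin[of x x z a 0] by simp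
lemma br_zero_left[simp]: "z \<in> V \<Longrightarrow> br 0 z = 0"
  using br_sc_left[of 0 z 0] by simp
lemma br_zero_right[simp]: "z \<in> V \<Longrightarrow> br z 0 = 0"
  using br_sc_right[of 0 z 0] by simp
lemma br_self[simp]: "x \<in> V \<Longrightarrow> br x x = 0"
  using lie unfolding lie_algebra_def by blast
lemma br_anti: "x \<in> V \<Longrightarrow> y \<in> V \<Longrightarrow> br y x = - br x y"
proof -
  assume a: "x \<in> V" "y \<in> V"
  have "br (x + y) (x + y) = br x x + br y x + (br x y + br y y)"
    using a by (simp add: br_add_left br_add_right del: br_self)
  then have "br y x + br x y = 0" using a by (simp add: add.commute)
  then show ?thesis by (simp add: eq_neg_iff_add_eq_0)
qed
lemma br_neg_left: "x \<in> V \<Longrightarrow> z \<in> V \<Longrightarrow> br (- x) z = - br x z"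
  using br_sc_left[of x z "-1"] by (simp add: sc_m1)
lemma br_jacobi: "x \<in> V \<Longrightarrow> y \<in> V \<Longrightarrow> z \<in> V \<Longrightarrow> br x (br y z) + br y (br z x) + br z (br x y) = 0"
  using lie unfolding lie_algebra_def by blast

lemma phi_in: "x \<in> V \<Longrightarrow> \<phi> x \<in> KK" using phom unfolding lie_hom_def by blast
lemma phi_lin: "x \<in> V \<Longrightarrow> y \<in> V \<Longrightarrow> \<phi> (sc a x + sc b y) = sc a (\<phi> x) + sc b (\<phi> y)"
  using phom unfolding lie_hom_def by blast
lemma phi_add: "x \<in> V \<Longrightarrow> y \<in> V \<Longrightarrow> \<phi> (x + y) = \<phi> x + \<phi> y" using phi_lin[of x y 1 1] by simp
lemma phi_sc: "x \<in> V \<Longrightarrow> \<phi> (sc a x) = sc a (\<phi> x)" using phi_lin[of x x a 0] by simp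
lemma phi_0[simp]: "\<phi> 0 = 0" using phi_sc[of 0 0] by simp
lemma phi_diff: "x \<in> V \<Longrightarrow> y \<in> V \<Longrightarrow> \<phi> (x - y) = \<phi> x - \<phi> y"
  using phi_lin[of x y 1 "-1"] by (simp add: sc_m1)
lemma phi_br: "x \<in> V \<Longrightarrow> y \<in> V \<Longrightarrow> \<phi> (br x y) = brK (\<phi> x) (\<phi> y)"
  using phom unfolding lie_hom_def by blast

lemma pi_in: "x \<in> free_lie \<Longrightarrow> \<pi> x \<in> V" using pihom unfolding lie_hom_def by blast
lemma pi_lin: "x \<in> free_lie \<Longrightarrow> y \<in> free_lie \<Longrightarrow> \<pi> (sc a x + sc b y) = sc a (\<pi> x) + sc b (\<pi> y)"
  using pihom unfolding lie_hom_def by blast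
lemma pi_add: "x \<in> free_lie \<Longrightarrow> y \<in> free_lie \<Longrightarrow> \<pi> (x + y) = \<pi> x + \<pi> y" using pi_lin[of x y 1 1] by simp
lemma pi_sc: "x \<in> free_lie \<Longrightarrow> \<pi> (sc a x) = sc a (\<pi> x)" using pi_lin[of x x a 0] by simp
lemma pi_0[simp]: "\<pi> 0 = 0" using pi_sc[of 0 0] free_lie.zero by simp
lemma pi_diff: "x \<in> free_lie \<Longrightarrow> y \<in> free_lie \<Longrightarrow> \<pi> (x - y) = \<pi> x - \<pi> y"
  using pi_lin[of x y 1 "-1"] by (simp add: sc_m1)
lemma pi_br: "x \<in> free_lie \<Longrightarrow> y \<in> free_lie \<Longrightarrow> \<pi> (nc_comm x y) = br (\<pi> x) (\<pi> y)"
  using pihom unfolding lie_hom_def by blast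

lemma F0[simp]: "0 \<in> free_lie" by (rule free_lie.zero)
lemma Fadd[simp]: "x \<in> free_lie \<Longrightarrow> y \<in> free_lie \<Longrightarrow> x + y \<in> free_lie" using free_lie.add .
lemma Fsc[simp]: "x \<in> free_lie \<Longrightarrow> sc a x \<in> free_lie" using free_lie.smult .
lemma Fdiff[simp]: "x \<in> free_lie \<Longrightarrow> y \<in> free_lie \<Longrightarrow> x - y \<in> free_lie"
  using free_lie_subspace vs.subspace_diff by blast
lemma Fneg[simp]: "x \<in> free_lie \<Longrightarrow> - x \<in> free_lie"
  using free_lie_subspace vs.subspace_neg by blast
lemma Fcomm[simp]: "x \<in> free_lie \<Longrightarrow> y \<in> free_lie \<Longrightarrow> nc_comm x y \<in> free_lie" using free_lie.comm .

lemma pi_sum: "finite T \<Longrightarrow> (\<And>x. x \<in> T \<Longrightarrow> g x \<in> free_lie) \<Longrightarrow>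
   \<pi> (\<Sum>x\<in>T. sc (u x) (g x)) = (\<Sum>x\<in>T. sc (u x) (\<pi> (g x)))"
proof (induction T rule: finite_induct)
  case (insert a T)
  have "(\<Sum>x\<in>T. sc (u x) (g x)) \<in> free_lie"
    using insert free_lie_subspace by (intro vs.subspace_sum) auto
  moreover have ga: "g a \<in> free_lie" using insert by simp
  ultimately have "\<pi> (sc (u a) (g a) + (\<Sum>x\<in>T. sc (u x) (g x))) = sc (u a) (\<pi> (g a)) + \<pi> (\<Sum>x\<in>T. sc (u x) (g x))"
    by (simp only: pi_add[OF Fsc[OF ga]] pi_sc[OF ga])
  moreover have ih: "\<pi> (\<Sum>x\<in>T. sc (u x) (g x)) = (\<Sum>x\<in>T. sc (u x) (\<pi> (g x)))"
    by (rule insert.IH) (use insert.prems in auto)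
  ultimately show ?case using insert by (simp only: sum.insert[OF insert.hyps])
qed simp

definition z where "z = (SOME z. z \<in> center V br \<and> z \<noteq> 0 \<and> center V br \<subseteq> range (\<lambda>k. sc k z))"

lemma z_props: "z \<in> center V br \<and> z \<noteq> 0 \<and> center V br \<subseteq> range (\<lambda>k. sc k z)"
proof -
  obtain B where B: "finite B" "card B = 1" "B \<subseteq> center V br" "indep_mod {} B"
      "center V br \<subseteq> span_of (B \<union> {})"
    using cdim unfolding has_dim_def has_quot_dim_def by auto
  then obtain b where b: "B = {b}" using card_1_singletonE by blast
  have "b \<noteq> 0"
  proof
    assume "b = 0"
    then have "(\<Sum>y\<in>{b}. sc ((\<lambda>_. 1::'a) y) y) \<in> span_of {}" by (simp add: span_of_empty)
    then have "\<forall>y\<in>{b}. (\<lambda>_. 1::'a) y = 0"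
      using B(4)[unfolded indep_mod_def, rule_format, of "{b}" "\<lambda>_. 1"] b by simp
    then show False by simp
  qed
  moreover have "center V br \<subseteq> range (\<lambda>k. sc k b)"
    using B(5) b by (simp add: span_of_eq vs.span_singleton)
  ultimately have "\<exists>z. z \<in> center V br \<and> z \<noteq> 0 \<and> center V br \<subseteq> range (\<lambda>k. sc k z)"
    using B(3) b by auto
  then show ?thesis unfolding z_def by (rule someI_ex)
qed

lemma zV[simp]: "z \<in> V" using z_props unfolding center_def by auto
lemma z_ne[simp]: "z \<noteq> 0" using z_props by auto
lemma z_left[simp]: "x \<in> V \<Longrightarrow> br z x = 0" using z_props unfolding center_def by auto
lemma z_right[simp]: "x \<in> V \<Longrightarrow> br x z = 0" using br_anti[of z x] z_left[of x] by simp
lemma center_z: "x \<in> center V br \<Longrightarrow> \<exists>k. x = sc k z" using z_props by auto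
lemma sc_z_inj: "sc a z = sc b z \<Longrightarrow> a = b"
proof -
  assume "sc a z = sc b z"
  then have "sc (a - b) z = 0" by (simp add: sc_def fun_eq_iff algebra_simps)
  then show "a = b" using z_ne by (auto simp: sc_def fun_eq_iff)
qed


lemma brz: "x \<in> V \<Longrightarrow> y \<in> V \<Longrightarrow> brK (\<phi> x) (\<phi> y) = 0 \<Longrightarrow> \<exists>k. br x y = sc k z"
proof -
  assume a: "x \<in> V" "y \<in> V" "brK (\<phi> x) (\<phi> y) = 0"
  then have "br x y \<in> center V br" using pker phi_br[of x y] by auto
  then show ?thesis using center_z by blast
qed

definition Ek :: "nat \<Rightarrow> nat + nat \<Rightarrow> 'a" where "Ek k = (if k \<le> 5 then EL k else ER (k - 5))"
definition w :: "nat \<Rightarrow> 'i \<Rightarrow> 'a" where "w k = (SOME x. x \<in> V \<and> \<phi> x = Ek k)"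

lemma w_props: "k \<in> {1..7} \<Longrightarrow> w k \<in> V \<and> \<phi> (w k) = Ek k"
proof -
  assume k: "k \<in> {1..7}"
  have "Ek k \<in> KK"
  proof (cases "k \<le> 5")
    case True then show ?thesis using k EL_in[of k] by (simp add: Ek_def)
  next
    case False then have "k - 5 \<in> {1,2}" using k by auto
    then show ?thesis using False ER_in[of "k - 5"] by (simp add: Ek_def)
  qed
  then have "\<exists>x. x \<in> V \<and> \<phi> x = Ek k" using psurj by (metis imageE)
  then show ?thesis unfolding w_def by (rule someI_ex)
qed

definition "g1 = w 1"
definition "g2 = w 2"
definition "g3 = w 3"
definition "g4 = br g1 g2"
definition "g5 = br g1 g3"
definition "g6 = w 6"
definition "g7 = w 7"

lemma gV[simp]: "g1 \<in> V" "g2 \<in> V" "g3 \<in> V" "g4 \<in> V" "g5 \<in> V" "g6 \<in> V" "g7 \<in> V"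
  using w_props[of 1] w_props[of 2] w_props[of 3] w_props[of 6] w_props[of 7]
  by (auto simp: g1_def g2_def g3_def g4_def g5_def g6_def g7_def)

lemma phi_g: "\<phi> g1 = EL 1" "\<phi> g2 = EL 2" "\<phi> g3 = EL 3" "\<phi> g6 = ER 1" "\<phi> g7 = ER 2"
  using w_props[of 1] w_props[of 2] w_props[of 3] w_props[of 6] w_props[of 7]
  by (auto simp: g1_def g2_def g3_def g6_def g7_def Ek_def)

lemma phi_g45: "\<phi> g4 = EL 4" "\<phi> g5 = EL 5"
  unfolding g4_def g5_def using phi_g
  by (auto simp: phi_br brK_formula EL_def ev_def fun_eq_iff split: sum.split)

lemma phi_z[simp]: "\<phi> z = 0"
  using z_props pker by auto

definition "G8 = {g1, g2, g3, g4, g5, g6, g7, z}"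

lemma V_span: "V \<subseteq> vs.span G8"
proof
  fix x assume x: "x \<in> V"
  let ?f = "\<phi> x"
  define y where "y = sc (?f (Inl 1)) g1 + sc (?f (Inl 2)) g2 + sc (?f (Inl 3)) g3 + sc (?f (Inl 4)) g4
     + sc (?f (Inl 5)) g5 + sc (?f (Inr 1)) g6 + sc (?f (Inr 2)) g7"
  have yV: "y \<in> V" unfolding y_def by simp
  have yS: "y \<in> vs.span G8" unfolding y_def G8_def
    by (intro vs.span_add vs.span_scale vs.span_base) auto
  have "\<phi> y = ?f"
    unfolding y_def
    apply (simp add: phi_add phi_sc phi_g phi_g45)
    using KK_decomp[OF phi_in[OF x]] by simp
  then have "\<phi> (x - y) = 0" using x yV by (simp add: phi_diff)
  then have "x - y \<in> center V br" using pker x yV by auto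
  then obtain k where "x - y = sc k z" using center_z by blast
  then have "x = sc k z + y" by (simp add: algebra_simps)
  also have "\<dots> \<in> vs.span G8"
    by (rule vs.span_add[OF _ yS]) (auto simp: G8_def intro: vs.span_scale vs.span_base)
  finally show "x \<in> vs.span G8" .
qed

end



lemma jac_helper: "(A::'b::ab_group_add) + B + C = 0 \<Longrightarrow> A = - B - C"
proof -
  assume h: "A + B + C = 0"
  have "A = (A + B + C) - B - C" by simp
  with h show ?thesis by simp
qed

context LS begin

definition lf :: "('i \<Rightarrow> 'a) \<Rightarrow> (nat list \<Rightarrow> 'a)" where "lf x = (SOME p. p \<in> free_lie \<and> \<pi> p = x)"
lemma lf: "x \<in> V \<Longrightarrow> lf x \<in> free_lie \<and> \<pi> (lf x) = x"
proof -
  assume "x \<in> V"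
  then have "\<exists>p. p \<in> free_lie \<and> \<pi> p = x" using pisurj by (metis imageE)
  then show ?thesis unfolding lf_def by (rule someI_ex)
qed

definition "f1 = lf g1"
definition "f2 = lf g2"
definition "f3 = lf g3"
definition "f4 = nc_comm f1 f2"
definition "f5 = nc_comm f1 f3"
definition "f6 = lf g6"
definition "f7 = lf g7"
definition "fz = lf z"

lemma fF[simp]: "f1 \<in> free_lie" "f2 \<in> free_lie" "f3 \<in> free_lie" "f4 \<in> free_lie" "f5 \<in> free_lie"
  "f6 \<in> free_lie" "f7 \<in> free_lie" "fz \<in> free_lie"
  using lf[of g1] lf[of g2] lf[of g3] lf[of g6] lf[of g7] lf[of z]
  by (auto simp: f1_def f2_def f3_def f4_def f5_def f6_def f7_def fz_def)

lemma pif[simp]: "\<pi> f1 = g1" "\<pi> f2 = g2" "\<pi> f3 = g3" "\<pi> f4 = g4" "\<pi> f5 = g5"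
  "\<pi> f6 = g6" "\<pi> f7 = g7" "\<pi> fz = z"
  using lf[of g1] lf[of g2] lf[of g3] lf[of g6] lf[of g7] lf[of z]
  by (auto simp: f1_def f2_def f3_def f4_def f5_def f6_def f7_def fz_def g4_def g5_def pi_br)

definition "Wset = {nc_comm r f | r f. r \<in> free_lie \<and> \<pi> r = 0 \<and> f \<in> free_lie}"
definition "WW = vs.span Wset"

lemma WL: "r \<in> free_lie \<Longrightarrow> \<pi> r = 0 \<Longrightarrow> a \<in> free_lie \<Longrightarrow> nc_comm r a \<in> WW"
  unfolding WW_def Wset_def by (rule vs.span_base) auto
lemma WR: "r \<in> free_lie \<Longrightarrow> \<pi> r = 0 \<Longrightarrow> a \<in> free_lie \<Longrightarrow> nc_comm a r \<in> WW"
  using WL[of r a] nc_comm_anti[of a r] unfolding WW_def by (metis vs.span_neg)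

lemma Q: "x \<in> free_lie \<Longrightarrow> a \<in> free_lie \<Longrightarrow> \<pi> x = sc s z \<Longrightarrow>
   nc_comm x a - sc s (nc_comm fz a) \<in> WW"
proof -
  assume a: "x \<in> free_lie" "a \<in> free_lie" "\<pi> x = sc s z"
  have "\<pi> (x - sc s fz) = 0" using a by (simp add: pi_diff pi_sc)
  then have "nc_comm (x - sc s fz) a \<in> WW" using a by (intro WL) auto
  then show ?thesis by (simp add: nc_comm_diff_left nc_comm_sc_left)
qed

lemma J1: "a \<in> free_lie \<Longrightarrow> b \<in> free_lie \<Longrightarrow> c \<in> free_lie \<Longrightarrow>
   br (\<pi> b) (\<pi> c) = sc s z \<Longrightarrow> br (\<pi> c) (\<pi> a) = sc t z \<Longrightarrow>
   nc_comm (nc_comm a b) c + sc s (nc_comm fz a) + sc t (nc_comm fz b) \<in> WW"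
proof -
  assume a: "a \<in> free_lie" "b \<in> free_lie" "c \<in> free_lie"
     "br (\<pi> b) (\<pi> c) = sc s z" "br (\<pi> c) (\<pi> a) = sc t z"
  have X: "nc_comm (nc_comm b c) a - sc s (nc_comm fz a) \<in> WW"
    using a by (intro Q) (auto simp: pi_br)
  have Y: "nc_comm (nc_comm c a) b - sc t (nc_comm fz b) \<in> WW"
    using a by (intro Q) (auto simp: pi_br)
  have eq: "nc_comm (nc_comm a b) c = - nc_comm (nc_comm b c) a - nc_comm (nc_comm c a) b"
    using jac_helper[OF nc_jacobi[of a b c]] .
  have "nc_comm (nc_comm a b) c + sc s (nc_comm fz a) + sc t (nc_comm fz b) =
     - ((nc_comm (nc_comm b c) a - sc s (nc_comm fz a)) + (nc_comm (nc_comm c a) b - sc t (nc_comm fz b)))"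
    unfolding eq by (simp add: algebra_simps)
  also have "\<dots> \<in> WW" using X Y unfolding WW_def by (intro vs.span_neg vs.span_add)
  finally show ?thesis .
qed

lemma J2: "a \<in> free_lie \<Longrightarrow> b \<in> free_lie \<Longrightarrow> c \<in> free_lie \<Longrightarrow>
   br (\<pi> b) (\<pi> c) = sc s z \<Longrightarrow>
   nc_comm (nc_comm a b) c + nc_comm (nc_comm c a) b + sc s (nc_comm fz a) \<in> WW"
proof -
  assume a: "a \<in> free_lie" "b \<in> free_lie" "c \<in> free_lie"
     "br (\<pi> b) (\<pi> c) = sc s z"
  have X: "nc_comm (nc_comm b c) a - sc s (nc_comm fz a) \<in> WW"
    using a by (intro Q) (auto simp: pi_br)
  have eq: "nc_comm (nc_comm a b) c = - nc_comm (nc_comm b c) a - nc_comm (nc_comm c a) b"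
    using jac_helper[OF nc_jacobi[of a b c]] .
  have "nc_comm (nc_comm a b) c + nc_comm (nc_comm c a) b + sc s (nc_comm fz a) =
     - (nc_comm (nc_comm b c) a - sc s (nc_comm fz a))"
    unfolding eq by (simp add: algebra_simps)
  also have "\<dots> \<in> WW" using X unfolding WW_def by (intro vs.span_neg)
  finally show ?thesis .
qed

lemma bz: "x \<in> V \<Longrightarrow> y \<in> V \<Longrightarrow> brK (\<phi> x) (\<phi> y) = 0 \<Longrightarrow> \<exists>s. br x y = sc s z"
  by (rule brz)

lemmas phis = phi_g phi_g45 phi_z

lemma z_sc0: "x \<in> V \<Longrightarrow> br x z = sc 0 z" "x \<in> V \<Longrightarrow> br z x = sc 0 z" by simp_all

end



context LS begin

definition "Tp = set [nc_comm f1 f2, nc_comm f1 f3, nc_comm f1 f6, nc_comm f1 f7, nc_comm f2 f3,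
   nc_comm f2 f6, nc_comm f2 f7, nc_comm f3 f6, nc_comm f3 f7, nc_comm f6 f7,
   nc_comm f4 f1, nc_comm f4 f2, nc_comm f5 f1, nc_comm f5 f2, nc_comm f5 f3,
   nc_comm fz f3, nc_comm fz f6, nc_comm fz f7]"
definition "T0 = Tp \<union> {nc_comm fz f1, nc_comm fz f2}"
definition "SP = vs.span (T0 \<union> Wset)"

lemma WW_SP: "x \<in> WW \<Longrightarrow> x \<in> SP"
  unfolding WW_def SP_def using vs.span_mono[of Wset "T0 \<union> Wset"] by auto
lemma T0_SP: "x \<in> T0 \<Longrightarrow> x \<in> SP"
  unfolding SP_def by (intro vs.span_base) auto
lemma SP_sub: "vs.subspace SP" unfolding SP_def by (rule vs.subspace_span)
lemma SP_add: "x \<in> SP \<Longrightarrow> y \<in> SP \<Longrightarrow> x + y \<in> SP" unfolding SP_def by (rule vs.span_add)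
lemma SP_diff: "x \<in> SP \<Longrightarrow> y \<in> SP \<Longrightarrow> x - y \<in> SP" unfolding SP_def by (rule vs.span_diff)
lemma SP_sc: "x \<in> SP \<Longrightarrow> sc a x \<in> SP" unfolding SP_def by (rule vs.span_scale)
lemma SP_neg: "x \<in> SP \<Longrightarrow> - x \<in> SP" unfolding SP_def by (rule vs.span_neg)
lemma SP_0: "0 \<in> SP" unfolding SP_def by (rule vs.span_zero)

lemma Jsp: "a \<in> free_lie \<Longrightarrow> b \<in> free_lie \<Longrightarrow> c \<in> free_lie \<Longrightarrow>
   \<exists>s. br (\<pi> b) (\<pi> c) = sc s z \<Longrightarrow> \<exists>t. br (\<pi> c) (\<pi> a) = sc t z \<Longrightarrow>
   nc_comm fz a \<in> SP \<Longrightarrow> nc_comm fz b \<in> SP \<Longrightarrow> nc_comm (nc_comm a b) c \<in> SP"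
proof -
  assume a: "a \<in> free_lie" "b \<in> free_lie" "c \<in> free_lie"
    "\<exists>s. br (\<pi> b) (\<pi> c) = sc s z" "\<exists>t. br (\<pi> c) (\<pi> a) = sc t z"
    "nc_comm fz a \<in> SP" "nc_comm fz b \<in> SP"
  then obtain s t where st: "br (\<pi> b) (\<pi> c) = sc s z" "br (\<pi> c) (\<pi> a) = sc t z" by auto
  have J: "nc_comm (nc_comm a b) c + sc s (nc_comm fz a) + sc t (nc_comm fz b) \<in> SP"
    using J1[OF a(1-3) st] by (rule WW_SP)
  have "nc_comm (nc_comm a b) c = (nc_comm (nc_comm a b) c + sc s (nc_comm fz a) + sc t (nc_comm fz b))
     - sc s (nc_comm fz a) - sc t (nc_comm fz b)" by simp
  also have "\<dots> \<in> SP" using J a(6,7) by (intro SP_diff SP_sc)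
  finally show ?thesis .
qed

lemma exs: "x \<in> V \<Longrightarrow> y \<in> V \<Longrightarrow> brK (\<phi> x) (\<phi> y) = 0 \<Longrightarrow> \<exists>s. br x y = sc s z"
  by (rule brz)

lemma brK0s:
  "brK (\<phi> g2) (\<phi> g5) = 0" "brK (\<phi> g5) (\<phi> g1) = 0" "brK (\<phi> g2) (\<phi> g6) = 0" "brK (\<phi> g6) (\<phi> g1) = 0"
  "brK (\<phi> g2) (\<phi> g7) = 0" "brK (\<phi> g7) (\<phi> g1) = 0" "brK (\<phi> g2) (\<phi> z) = 0" "brK (\<phi> z) (\<phi> g1) = 0"
  "brK (\<phi> g3) (\<phi> g6) = 0" "brK (\<phi> g3) (\<phi> g7) = 0" "brK (\<phi> g3) (\<phi> z) = 0"
  "brK (\<phi> g2) (\<phi> g3) = 0" "brK (\<phi> g2) (\<phi> g4) = 0" "brK (\<phi> g4) (\<phi> g1) = 0" "brK (\<phi> g3) (\<phi> g4) = 0"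
  by (simp_all add: phis brK_formula EL_def ER_def fun_eq_iff ev_def split: sum.split)

lemma base20:
  "nc_comm f1 f2 \<in> SP" "nc_comm f1 f3 \<in> SP" "nc_comm f1 f6 \<in> SP" "nc_comm f1 f7 \<in> SP" "nc_comm f2 f3 \<in> SP"
  "nc_comm f2 f6 \<in> SP" "nc_comm f2 f7 \<in> SP" "nc_comm f3 f6 \<in> SP" "nc_comm f3 f7 \<in> SP" "nc_comm f6 f7 \<in> SP"
  "nc_comm f4 f1 \<in> SP" "nc_comm f4 f2 \<in> SP" "nc_comm f5 f1 \<in> SP" "nc_comm f5 f2 \<in> SP" "nc_comm f5 f3 \<in> SP"
  "nc_comm fz f3 \<in> SP" "nc_comm fz f6 \<in> SP" "nc_comm fz f7 \<in> SP" "nc_comm fz f1 \<in> SP" "nc_comm fz f2 \<in> SP"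
  by (rule T0_SP, simp add: T0_def Tp_def)+

lemma base_f4: "nc_comm f4 f5 \<in> SP" "nc_comm f4 f6 \<in> SP" "nc_comm f4 f7 \<in> SP" "nc_comm f4 fz \<in> SP"
  unfolding f4_def
  by (intro Jsp; (simp add: base20)?; intro exs; simp add: brK0s)+

lemma base_f5: "nc_comm f5 f6 \<in> SP" "nc_comm f5 f7 \<in> SP" "nc_comm f5 fz \<in> SP"
  unfolding f5_def
  by (intro Jsp; (simp add: base20)?; intro exs; simp add: brK0s)+

lemma base_f43: "nc_comm f4 f3 \<in> SP"
proof -
  obtain s where s: "br (\<pi> f2) (\<pi> f3) = sc s z" using exs[of g2 g3] brK0s by auto
  have J: "nc_comm f4 f3 + nc_comm (nc_comm f3 f1) f2 + sc s (nc_comm fz f1) \<in> SP"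
    using J2[OF _ _ _ s] unfolding f4_def by (intro WW_SP) simp
  have "nc_comm (nc_comm f3 f1) f2 = - nc_comm f5 f2"
    unfolding f5_def by (simp add: nc_comm_anti[of f3 f1] nc_comm_neg_left)
  then have "nc_comm f4 f3 = (nc_comm f4 f3 + nc_comm (nc_comm f3 f1) f2 + sc s (nc_comm fz f1))
      + nc_comm f5 f2 - sc s (nc_comm fz f1)" by simp
  also have "\<dots> \<in> SP" by (rule SP_diff[OF SP_add[OF J base20(14)] SP_sc[OF base20(19)]])
  finally show ?thesis .
qed


lemma swapSP: "nc_comm a b \<in> SP \<Longrightarrow> nc_comm b a \<in> SP"
  by (metis SP_neg nc_comm_anti)

lemmas all28 = base20 base_f4 base_f5 base_f43

lemma allpairs: "x \<in> {f1,f2,f3,f4,f5,f6,f7,fz} \<Longrightarrow> y \<in> {f1,f2,f3,f4,f5,f6,f7,fz} \<Longrightarrow> nc_comm x y \<in> SP"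
  using all28 all28[THEN swapSP] SP_0 by auto

lemma lift_gen: "(\<And>p. p \<in> {f1,f2,f3,f4,f5,f6,f7,fz} \<Longrightarrow> Q p) \<Longrightarrow> \<forall>g\<in>G8. \<exists>p\<in>free_lie. \<pi> p = g \<and> Q p"
  unfolding G8_def using fF pif by (simp; blast)

lemma lift_all:
  assumes P0: "P 0"
    and Padd: "\<And>p q. p \<in> free_lie \<Longrightarrow> q \<in> free_lie \<Longrightarrow> P p \<Longrightarrow> P q \<Longrightarrow> P (p + q)"
    and Psc: "\<And>p a. p \<in> free_lie \<Longrightarrow> P p \<Longrightarrow> P (sc a p)"
    and gens: "\<forall>g\<in>G8. \<exists>p\<in>free_lie. \<pi> p = g \<and> P p"
    and x: "x \<in> V"
  shows "\<exists>p\<in>free_lie. \<pi> p = x \<and> P p"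
proof -
  let ?A = "{x. \<exists>p\<in>free_lie. \<pi> p = x \<and> P p}"
  have "vs.subspace ?A"
    unfolding vs.subspace_def
  proof (intro conjI ballI allI)
    show "0 \<in> ?A" using P0 by (intro CollectI bexI[of _ 0]) auto
  next
    fix x y assume "x \<in> ?A" "y \<in> ?A"
    then obtain p q where "p \<in> free_lie" "\<pi> p = x" "P p" "q \<in> free_lie" "\<pi> q = y" "P q" by auto
    then show "x + y \<in> ?A" using Padd by (intro CollectI bexI[of _ "p + q"]) (auto simp: pi_add)
  next
    fix c x assume "x \<in> ?A"
    then obtain p where "p \<in> free_lie" "\<pi> p = x" "P p" by auto
    then show "sc c x \<in> ?A" using Psc by (intro CollectI bexI[of _ "sc c p"]) (auto simp: pi_sc)
  qed
  moreover have "G8 \<subseteq> ?A" using gens by auto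
  ultimately have "vs.span G8 \<subseteq> ?A" using vs.span_minimal by blast
  then show ?thesis using x V_span by auto
qed

lemma inner: "p \<in> free_lie \<Longrightarrow> \<forall>h\<in>G8. \<exists>q\<in>free_lie. \<pi> q = h \<and> nc_comm p q \<in> SP \<Longrightarrow>
   \<forall>q\<in>free_lie. nc_comm p q \<in> SP"
proof (intro ballI)
  fix q :: "nat list \<Rightarrow> 'a" assume p: "p \<in> free_lie" and g: "\<forall>h\<in>G8. \<exists>q\<in>free_lie. \<pi> q = h \<and> nc_comm p q \<in> SP"
    and q: "q \<in> free_lie"
  obtain q0 where q0: "q0 \<in> free_lie" "\<pi> q0 = \<pi> q" "nc_comm p q0 \<in> SP"
    using lift_all[where P="\<lambda>q. nc_comm p q \<in> SP", OF _ _ _ g pi_in[OF q]]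
    by (auto simp: SP_0 nc_comm_add_right nc_comm_sc_right SP_add SP_sc)
  have "nc_comm p (q - q0) \<in> WW" using q q0 p by (intro WR) (auto simp: pi_diff)
  then have "nc_comm p q0 + nc_comm p (q - q0) \<in> SP" using q0 by (intro SP_add[OF _ WW_SP])
  then show "nc_comm p q \<in> SP" by (simp add: nc_comm_diff_right)
qed

lemma outer: "\<forall>g\<in>G8. \<exists>p\<in>free_lie. \<pi> p = g \<and> (\<forall>q\<in>free_lie. nc_comm p q \<in> SP) \<Longrightarrow>
   p \<in> free_lie \<Longrightarrow> q \<in> free_lie \<Longrightarrow> nc_comm p q \<in> SP"
proof -
  assume g: "\<forall>g\<in>G8. \<exists>p\<in>free_lie. \<pi> p = g \<and> (\<forall>q\<in>free_lie. nc_comm p q \<in> SP)"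
    and p: "p \<in> free_lie" and q: "q \<in> free_lie"
  obtain p0 where p0: "p0 \<in> free_lie" "\<pi> p0 = \<pi> p" "\<forall>q\<in>free_lie. nc_comm p0 q \<in> SP"
    using lift_all[where P="\<lambda>p. \<forall>q\<in>free_lie. nc_comm p q \<in> SP", OF _ _ _ g pi_in[OF p]]
    by (auto simp: SP_0 nc_comm_add_left nc_comm_sc_left SP_add SP_sc)
  have "nc_comm (p - p0) q \<in> WW" using q p0 p by (intro WL) (auto simp: pi_diff)
  then have "nc_comm p0 q + nc_comm (p - p0) q \<in> SP" using p0 q by (intro SP_add[OF _ WW_SP]) auto
  then show "nc_comm p q \<in> SP" by (simp add: nc_comm_diff_left)
qed

lemma F2_SP: "brk_span nc_comm free_lie free_lie \<subseteq> SP"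
proof -
  have g: "\<forall>g\<in>G8. \<exists>p\<in>free_lie. \<pi> p = g \<and> (\<forall>q\<in>free_lie. nc_comm p q \<in> SP)"
  proof (rule lift_gen)
    fix p assume p: "p \<in> {f1,f2,f3,f4,f5,f6,f7,fz}"
    then have "p \<in> free_lie" using fF by auto
    moreover have "\<forall>h\<in>G8. \<exists>q\<in>free_lie. \<pi> q = h \<and> nc_comm p q \<in> SP"
      by (rule lift_gen) (rule allpairs[OF p])
    ultimately show "\<forall>q\<in>free_lie. nc_comm p q \<in> SP" by (rule inner)
  qed
  have "{nc_comm a b |a b. a \<in> free_lie \<and> b \<in> free_lie} \<subseteq> SP"
    using outer[OF g] by auto
  then show ?thesis unfolding brk_span_def span_of_eq using SP_sub vs.span_minimal by blast
qed

end



context LS begin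

lemma exs': "x \<in> V \<Longrightarrow> y \<in> V \<Longrightarrow> brK (\<phi> x) (\<phi> y) = 0 \<Longrightarrow> (\<And>s. br x y = sc s z \<Longrightarrow> thesis) \<Longrightarrow> thesis"
  using brz by blast

lemma g4_c_zero: "c \<in> V \<Longrightarrow> br g2 c = sc s z \<Longrightarrow> br c g1 = sc t z \<Longrightarrow> br g4 c = 0"
proof -
  assume a: "c \<in> V" "br g2 c = sc s z" "br c g1 = sc t z"
  have "br g1 (br g2 c) + br g2 (br c g1) + br c (br g1 g2) = 0" using a by (intro br_jacobi) auto
  then have "br c g4 = 0" using a by (simp add: br_sc_right g4_def)
  then show ?thesis using br_anti[of c g4] a by simp
qed

lemma g4_not_central: "br g4 g1 \<noteq> 0 \<or> br g4 g2 \<noteq> 0 \<or> br g4 g3 \<noteq> 0"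
proof (rule ccontr)
  assume "\<not> ?thesis"
  then have h: "br g4 g1 = 0" "br g4 g2 = 0" "br g4 g3 = 0" by auto
  have h5: "br g4 g5 = 0"
    by (rule exs'[of g2 g5], simp, simp, simp add: brK0s, rule exs'[of g5 g1], simp, simp, simp add: brK0s)
       (rule g4_c_zero, auto)
  have h6: "br g4 g6 = 0"
    by (rule exs'[of g2 g6], simp, simp, simp add: brK0s, rule exs'[of g6 g1], simp, simp, simp add: brK0s)
       (rule g4_c_zero, auto)
  have h7: "br g4 g7 = 0"
    by (rule exs'[of g2 g7], simp, simp, simp add: brK0s, rule exs'[of g7 g1], simp, simp, simp add: brK0s)
       (rule g4_c_zero, auto)
  let ?A = "{x \<in> V. br g4 x = 0}"
  have "vs.subspace ?A"
    unfolding vs.subspace_def by (auto simp: br_add_right br_sc_right)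
  moreover have "G8 \<subseteq> ?A" using h h5 h6 h7 by (auto simp: G8_def)
  ultimately have "V \<subseteq> ?A" using V_span vs.span_minimal by blast
  then have "g4 \<in> center V br" unfolding center_def by auto
  then have "\<phi> g4 = 0" using pker by auto
  then have "EL 4 (Inl 4) = (0::'a)" using phi_g45(1) by (metis zero_fun_apply)
  then show False by (simp add: EL_def)
qed

lemma s25_34: "br g2 g5 = br g3 g4"
proof -
  obtain s where s: "br g2 g3 = sc s z" by (rule exs'[of g2 g3]) (auto simp: brK0s)
  have "br g1 (br g2 g3) + br g2 (br g3 g1) + br g3 (br g1 g2) = 0" by (intro br_jacobi) auto
  moreover have "br g3 g1 = - g5" using br_anti[of g1 g3] by (simp add: g5_def)
  ultimately have "- br g2 g5 + br g3 g4 = 0"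
    using s by (simp add: br_sc_right g4_def br_anti[of g5 g2] br_anti[of "-g5" g2] br_neg_left)
  then show ?thesis by (simp add: add.commute eq_neg_iff_add_eq_0 [symmetric])
qed

definition "SPT T = vs.span (T \<union> Wset)"

lemma elim: "c \<noteq> 0 \<Longrightarrow> sc c x + y \<in> WW \<Longrightarrow> y \<in> SPT T \<Longrightarrow> x \<in> SPT T"
proof -
  assume a: "c \<noteq> 0" "sc c x + y \<in> WW" "y \<in> SPT T"
  have "WW \<subseteq> SPT T" unfolding WW_def SPT_def by (rule vs.span_mono) auto
  then have "sc (1/c) ((sc c x + y) - y) \<in> SPT T" using a unfolding SPT_def
    by (intro vs.span_scale vs.span_diff) auto
  then show ?thesis using a by (simp add: sc_def fun_eq_iff)
qed

lemma SPT_base: "x \<in> T \<Longrightarrow> x \<in> SPT T" unfolding SPT_def by (intro vs.span_base) auto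

lemma exists_T: "\<exists>T. finite T \<and> card T \<le> 19 \<and> brk_span nc_comm free_lie free_lie \<subseteq> SPT T"
proof -
  obtain s24 where s24: "br g2 g4 = sc s24 z" by (rule exs'[of g2 g4]) (auto simp: brK0s)
  obtain s41 where s41: "br g4 g1 = sc s41 z" by (rule exs'[of g4 g1]) (auto simp: brK0s)
  obtain s34 where s34: "br g3 g4 = sc s34 z" by (rule exs'[of g3 g4]) (auto simp: brK0s)
  obtain s51 where s51: "br g5 g1 = sc s51 z" by (rule exs'[of g5 g1]) (auto simp: brK0s)
  have s25: "br g2 g5 = sc s34 z" using s25_34 s34 by simp
  let ?z1 = "nc_comm fz f1" and ?z2 = "nc_comm fz f2" and ?z3 = "nc_comm fz f3"
  have "?z2 \<in> SPT (insert ?z1 Tp) \<or> ?z1 \<in> SPT (insert ?z2 Tp)"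
  proof -
    have c: "s41 \<noteq> 0 \<or> s24 \<noteq> 0 \<or> s34 \<noteq> 0"
      using g4_not_central s24 s41 s34 br_anti[of g2 g4] br_anti[of g3 g4] by auto
    moreover
    { assume "s41 \<noteq> 0"
      have "nc_comm (nc_comm f1 f2) f4 + sc s24 ?z1 + sc s41 ?z2 \<in> WW"
        using s24 s41 by (intro J1) auto
      then have "sc s41 ?z2 + sc s24 ?z1 \<in> WW" by (simp add: f4_def add.commute)
      then have "?z2 \<in> SPT (insert ?z1 Tp)"
        by (rule elim[OF \<open>s41 \<noteq> 0\<close>]) (simp add: SPT_def vs.span_scale vs.span_base) }
    moreover
    { assume "s24 \<noteq> 0"
      have "nc_comm (nc_comm f1 f2) f4 + sc s24 ?z1 + sc s41 ?z2 \<in> WW"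
        using s24 s41 by (intro J1) auto
      then have "sc s24 ?z1 + sc s41 ?z2 \<in> WW" by (simp add: f4_def)
      then have "?z1 \<in> SPT (insert ?z2 Tp)"
        by (rule elim[OF \<open>s24 \<noteq> 0\<close>]) (simp add: SPT_def vs.span_scale vs.span_base) }
    moreover
    { assume "s34 \<noteq> 0"
      have A: "nc_comm (nc_comm f1 f2) f5 + sc s34 ?z1 + sc s51 ?z2 \<in> WW"
        using s25 s51 by (intro J1) auto
      have B: "nc_comm (nc_comm f1 f3) f4 + sc s34 ?z1 + sc s41 ?z3 \<in> WW"
        using s34 s41 by (intro J1) auto
      have e1: "nc_comm (nc_comm f1 f3) f4 = - nc_comm (nc_comm f1 f2) f5"
        unfolding f4_def[symmetric] f5_def[symmetric] by (rule nc_comm_anti)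
      have sc2: "sc s34 ?z1 + sc s34 ?z1 = sc (2 * s34) ?z1"
        by (simp add: sc_def fun_eq_iff algebra_simps)
      have "(nc_comm (nc_comm f1 f2) f5 + sc s34 ?z1 + sc s51 ?z2) + (nc_comm (nc_comm f1 f3) f4 + sc s34 ?z1 + sc s41 ?z3)
         = sc (2 * s34) ?z1 + (sc s51 ?z2 + sc s41 ?z3)"
        unfolding e1 sc2[symmetric] by (simp add: algebra_simps)
      then have "sc (2 * s34) ?z1 + (sc s51 ?z2 + sc s41 ?z3) \<in> WW"
        using A B unfolding WW_def by (metis vs.span_add)
      moreover have "2 * s34 \<noteq> 0" using \<open>s34 \<noteq> 0\<close> two by simp
      moreover have "?z3 \<in> Tp" by (simp add: Tp_def)
      have "?z1 \<in> SPT (insert ?z2 Tp)"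
      proof (rule elim[of "2 * s34"])
        show "sc s51 ?z2 + sc s41 ?z3 \<in> SPT (insert ?z2 Tp)"
          unfolding SPT_def using \<open>?z3 \<in> Tp\<close>
          by (intro vs.span_add vs.span_scale vs.span_base) auto
      qed (use \<open>2 * s34 \<noteq> 0\<close> \<open>sc (2 * s34) ?z1 + (sc s51 ?z2 + sc s41 ?z3) \<in> WW\<close> in auto) }
    ultimately show ?thesis by blast
  qed
  moreover have "T0 \<subseteq> SPT (insert ?z1 Tp) \<Longrightarrow> brk_span nc_comm free_lie free_lie \<subseteq> SPT (insert ?z1 Tp)"
    "T0 \<subseteq> SPT (insert ?z2 Tp) \<Longrightarrow> brk_span nc_comm free_lie free_lie \<subseteq> SPT (insert ?z2 Tp)"
  proof -
    have gen: "T0 \<subseteq> SPT T \<Longrightarrow> brk_span nc_comm free_lie free_lie \<subseteq> SPT T" for T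
    proof -
      assume "T0 \<subseteq> SPT T"
      moreover have "Wset \<subseteq> SPT T" unfolding SPT_def using vs.span_superset[of "T \<union> Wset"] by auto
      ultimately have "SP \<subseteq> SPT T" unfolding SP_def SPT_def
        using vs.span_minimal[OF _ vs.subspace_span] by (metis Un_subset_iff)
      then show ?thesis using F2_SP by auto
    qed
    show "T0 \<subseteq> SPT (insert ?z1 Tp) \<Longrightarrow> brk_span nc_comm free_lie free_lie \<subseteq> SPT (insert ?z1 Tp)" by (rule gen)
    show "T0 \<subseteq> SPT (insert ?z2 Tp) \<Longrightarrow> brk_span nc_comm free_lie free_lie \<subseteq> SPT (insert ?z2 Tp)" by (rule gen)
  qed
  moreover have "card (insert x Tp) \<le> 19" for x
  proof -
    have "card Tp \<le> 18" unfolding Tp_def by (rule card_length[THEN order_trans]) simp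
    then show ?thesis using card_insert_le_m1[of 19 Tp x] by (simp add: Tp_def card_insert_if)
  qed
  moreover have "finite (insert x Tp)" for x by (simp add: Tp_def)
  moreover have "Tp \<subseteq> SPT (insert x Tp)" for x using SPT_base by auto
  ultimately show ?thesis unfolding T0_def
    by (metis (no_types, lifting) SPT_base insert_subset insertI1 Un_insert_right sup_bot.right_neutral)
qed

end



lemma EL_ne: "a \<noteq> b \<Longrightarrow> (EL a :: nat + nat \<Rightarrow> 'a::field) \<noteq> EL b"
proof
  assume "a \<noteq> b" "(EL a :: nat + nat \<Rightarrow> 'a::field) = EL b"
  then have "EL a (Inl a) = (EL b (Inl a) :: 'a)" by simp
  then show False using \<open>a \<noteq> b\<close> by (simp add: EL_def)
qed
lemma ER_ne: "a \<noteq> b \<Longrightarrow> (ER a :: nat + nat \<Rightarrow> 'a::field) \<noteq> ER b"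
proof
  assume "a \<noteq> b" "(ER a :: nat + nat \<Rightarrow> 'a::field) = ER b"
  then have "ER a (Inr a) = (ER b (Inr a) :: 'a)" by simp
  then show False using \<open>a \<noteq> b\<close> by (simp add: ER_def)
qed
lemma ELR_ne: "(EL a :: nat + nat \<Rightarrow> 'a::field) \<noteq> ER b"
proof
  assume "(EL a :: nat + nat \<Rightarrow> 'a::field) = ER b"
  then have "EL a (Inl a) = (ER b (Inl a) :: 'a)" by simp
  then show False by (simp add: EL_def ER_def)
qed
lemma EL_nz: "(EL a :: nat + nat \<Rightarrow> 'a::field) \<noteq> 0"
proof
  assume "(EL a :: nat + nat \<Rightarrow> 'a::field) = 0"
  then have "EL a (Inl a) = (0 :: 'a)" by simp
  then show False by (simp add: EL_def)
qed
lemma ER_nz: "(ER a :: nat + nat \<Rightarrow> 'a::field) \<noteq> 0"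
proof
  assume "(ER a :: nat + nat \<Rightarrow> 'a::field) = 0"
  then have "ER a (Inr a) = (0 :: 'a)" by simp
  then show False by (simp add: ER_def)
qed

context LS begin

lemma G8_distinct: "distinct [g1, g2, g3, g4, g5, g6, g7, z]"
proof -
  have "distinct (map \<phi> [g1, g2, g3, g4, g5, g6, g7, z])"
    by (simp add: phis EL_ne ER_ne ELR_ne ELR_ne[symmetric] EL_nz ER_nz EL_nz[symmetric] ER_nz[symmetric])
  then show ?thesis by (simp only: distinct_map)
qed

lemma G8_card: "card G8 = 8"
  using distinct_card[OF G8_distinct] unfolding G8_def by simp

lemma G8_indep: "indep_mod {} G8"
  unfolding indep_mod_def
proof (intro allI impI)
  fix T u assume T: "finite T" "T \<subseteq> G8" "(\<Sum>x\<in>T. sc (u x) x) \<in> span_of {}"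
  define u' where "u' x = (if x \<in> T then u x else 0)" for x
  have "(\<Sum>x\<in>T. sc (u x) x) = (\<Sum>x\<in>G8. sc (u' x) x)"
    by (rule sum.mono_neutral_cong_left) (use T in \<open>auto simp: G8_def u'_def\<close>)
  also have "\<dots> = sc (u' g1) g1 + (sc (u' g2) g2 + (sc (u' g3) g3 + (sc (u' g4) g4 + (sc (u' g5) g5
      + (sc (u' g6) g6 + (sc (u' g7) g7 + sc (u' z) z))))))"
    unfolding G8_def using sum.distinct_set_conv_list[OF G8_distinct, of "\<lambda>x. sc (u' x) x"] by simp
  finally have eq: "sc (u' g1) g1 + (sc (u' g2) g2 + (sc (u' g3) g3 + (sc (u' g4) g4 + (sc (u' g5) g5
      + (sc (u' g6) g6 + (sc (u' g7) g7 + sc (u' z) z)))))) = 0"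
    using T(3) by (simp add: span_of_empty)
  then have "\<phi> (sc (u' g1) g1 + (sc (u' g2) g2 + (sc (u' g3) g3 + (sc (u' g4) g4 + (sc (u' g5) g5
      + (sc (u' g6) g6 + (sc (u' g7) g7 + sc (u' z) z))))))) = 0" by simp
  then have ph: "sc (u' g1) (EL 1) + (sc (u' g2) (EL 2) + (sc (u' g3) (EL 3) + (sc (u' g4) (EL 4) + (sc (u' g5) (EL 5)
      + (sc (u' g6) (ER 1) + (sc (u' g7) (ER 2))))))) = 0"
    by (simp add: phi_add phi_sc phis)
  have c: "u' g1 = 0" "u' g2 = 0" "u' g3 = 0" "u' g4 = 0" "u' g5 = 0" "u' g6 = 0" "u' g7 = 0"
    using fun_cong[OF ph, of "Inl 1"] fun_cong[OF ph, of "Inl 2"] fun_cong[OF ph, of "Inl 3"]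
      fun_cong[OF ph, of "Inl 4"] fun_cong[OF ph, of "Inl 5"] fun_cong[OF ph, of "Inr 1"]
      fun_cong[OF ph, of "Inr 2"]
    by (simp_all add: EL_def ER_def sc_def)
  then have "sc (u' z) z = 0" using eq by simp
  then have cz: "u' z = 0" using sc_z_inj[of "u' z" 0] by simp
  show "\<forall>x\<in>T. u x = 0"
  proof
    fix x assume "x \<in> T"
    then have "x \<in> G8" "u' x = u x" using T by (auto simp: u'_def)
    then show "u x = 0" using c cz by (auto simp: G8_def)
  qed
qed

lemma dim_ge8: "has_dim V n \<Longrightarrow> 8 \<le> n"
proof -
  assume "has_dim V n"
  then obtain B where B: "finite B" "card B = n" "B \<subseteq> V" "V \<subseteq> span_of (B \<union> {})"
    unfolding has_dim_def has_quot_dim_def by auto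
  have "G8 \<subseteq> vs.span (B \<union> {})" using B(4) gV unfolding span_of_eq G8_def by auto
  then have "card G8 \<le> card B"
    by (intro indep_mod_card[OF _ G8_indep B(1)]) (auto simp: G8_def)
  then show ?thesis using G8_card B by simp
qed


definition "RR = {p \<in> free_lie. \<pi> p = 0}"

lemma WW_eq: "brk_span nc_comm RR free_lie = WW"
proof -
  have "{nc_comm a b |a b. a \<in> RR \<and> b \<in> free_lie} = Wset" by (auto simp: Wset_def RR_def)
  then show ?thesis unfolding brk_span_def WW_def span_of_eq by simp
qed

lemma WW_ker: "x \<in> WW \<Longrightarrow> x \<in> free_lie \<and> \<pi> x = 0"
proof -
  assume x: "x \<in> WW"
  have "vs.subspace {x \<in> free_lie. \<pi> x = 0}"
    unfolding vs.subspace_def by (auto simp: pi_add pi_sc)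
  moreover have "Wset \<subseteq> {x \<in> free_lie. \<pi> x = 0}"
    by (auto simp: Wset_def pi_br pi_in)
  ultimately have "WW \<subseteq> {x \<in> free_lie. \<pi> x = 0}" unfolding WW_def using vs.span_minimal by blast
  then show ?thesis using x by auto
qed

lemma F2_free: "brk_span nc_comm free_lie free_lie \<subseteq> free_lie"
  unfolding brk_span_def span_of_eq by (rule span_free_lie_sub) auto

lemma lift2: "b \<in> brk_span br V V \<Longrightarrow> \<exists>g\<in>brk_span nc_comm free_lie free_lie. \<pi> g = b"
proof -
  assume b: "b \<in> brk_span br V V"
  let ?F2 = "brk_span nc_comm free_lie free_lie"
  have F2s: "vs.subspace ?F2" unfolding brk_span_def span_of_eq by (rule vs.subspace_span)
  let ?A = "{x. \<exists>g\<in>?F2. \<pi> g = x}"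
  have "vs.subspace ?A"
    unfolding vs.subspace_def
  proof (intro conjI ballI allI)
    show "0 \<in> ?A" using F2s vs.subspace_0 by force
  next
    fix x y assume "x \<in> ?A" "y \<in> ?A"
    then obtain p q where pq: "p \<in> ?F2" "\<pi> p = x" "q \<in> ?F2" "\<pi> q = y" by auto
    then have "p \<in> free_lie" "q \<in> free_lie" using F2_free by auto
    then have "\<pi> (p + q) = x + y" using pq by (simp add: pi_add)
    moreover have "p + q \<in> ?F2" using pq F2s vs.subspace_add by blast
    ultimately show "x + y \<in> ?A" by blast
  next
    fix c x assume "x \<in> ?A"
    then obtain p where pq: "p \<in> ?F2" "\<pi> p = x" by auto
    then have "p \<in> free_lie" using F2_free by auto
    then have "\<pi> (sc c p) = sc c x" using pq by (simp add: pi_sc)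
    moreover have "sc c p \<in> ?F2" using pq F2s vs.subspace_scale by blast
    ultimately show "sc c x \<in> ?A" by blast
  qed
  moreover have "{br a b |a b. a \<in> V \<and> b \<in> V} \<subseteq> ?A"
  proof
    fix x assume "x \<in> {br a b |a b. a \<in> V \<and> b \<in> V}"
    then obtain a b where ab: "a \<in> V" "b \<in> V" "x = br a b" by auto
    have "nc_comm (lf a) (lf b) \<in> ?F2"
      unfolding brk_span_def span_of_eq using lf[OF ab(1)] lf[OF ab(2)] by (intro vs.span_base) auto
    moreover have "\<pi> (nc_comm (lf a) (lf b)) = x" using lf[OF ab(1)] lf[OF ab(2)] ab by (simp add: pi_br)
    ultimately show "x \<in> ?A" by auto
  qed
  ultimately have "brk_span br V V \<subseteq> ?A" unfolding brk_span_def span_of_eq using vs.span_minimal by blast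
  then show ?thesis using b by auto
qed

lemma main_bound:
  assumes hq: "has_quot_dim (RR \<inter> brk_span nc_comm free_lie free_lie) (brk_span nc_comm RR free_lie) d"
    and h3: "has_dim (brk_span br V V) 3"
  shows "d + 3 \<le> 19"
proof -
  let ?F2 = "brk_span nc_comm free_lie free_lie"
  obtain B where B: "finite B" "card B = d" "B \<subseteq> RR \<inter> ?F2" "indep_mod WW B"
    using hq unfolding has_quot_dim_def WW_eq by auto
  obtain B' where B': "finite B'" "card B' = 3" "B' \<subseteq> brk_span br V V" "indep_mod {} B'"
    using h3 unfolding has_dim_def has_quot_dim_def by auto
  define gl where "gl b = (SOME g. g \<in> ?F2 \<and> \<pi> g = b)" for b
  have gl: "gl b \<in> ?F2 \<and> \<pi> (gl b) = b" if "b \<in> B'" for b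
    unfolding gl_def using lift2[of b] that B'(3) by (metis (mono_tags, lifting) someI_ex subsetD)
  have Bnz: "b \<noteq> 0" if "b \<in> B'" for b
  proof
    assume "b = 0"
    then have "(\<Sum>y\<in>{b}. sc ((\<lambda>_. 1::'a) y) y) \<in> span_of {}" by (simp add: span_of_empty)
    then have "\<forall>y\<in>{b}. (\<lambda>_. 1::'a) y = 0"
      using B'(4)[unfolded indep_mod_def, rule_format, of "{b}" "\<lambda>_. 1"] that by simp
    then show False by simp
  qed
  define G where "G = gl ` B'"
  have inj: "inj_on gl B'" by (rule inj_onI) (metis gl)
  have cG: "card G = 3" unfolding G_def using card_image[OF inj] B'(2) by simp
  have fG: "finite G" unfolding G_def using B'(1) by simp
  have disj: "B \<inter> G = {}"
  proof (rule ccontr)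
    assume "B \<inter> G \<noteq> {}"
    then obtain b where b: "b \<in> B'" "gl b \<in> B" unfolding G_def by auto
    then have "\<pi> (gl b) = 0" using B(3) by (auto simp: RR_def)
    then show False using gl[OF b(1)] Bnz[OF b(1)] by simp
  qed
  define X where "X = B \<union> G"
  have fX: "finite X" unfolding X_def using B(1) fG by simp
  have cX: "card X = d + 3" unfolding X_def using card_Un_disjoint[OF B(1) fG disj] B(2) cG by simp
  have XF2: "X \<subseteq> ?F2" unfolding X_def G_def using B(3) gl by auto
  then have XF: "X \<subseteq> free_lie" using F2_free by auto
  have spWW: "span_of WW = WW" unfolding span_of_eq WW_def by (rule vs.span_span)
  have indX: "indep_mod WW X"
    unfolding indep_mod_def
  proof (intro allI impI)
    fix T u assume T: "finite T" "T \<subseteq> X" "(\<Sum>x\<in>T. sc (u x) x) \<in> span_of WW"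
    have TF: "\<And>x. x \<in> T \<Longrightarrow> x \<in> free_lie" using T XF by auto
    have split: "(\<Sum>x\<in>T. sc (u x) x) = (\<Sum>x\<in>T \<inter> B. sc (u x) x) + (\<Sum>x\<in>T - B. sc (u x) x)"
      using T(1) by (rule sum.Int_Diff)
    have "\<pi> (\<Sum>x\<in>T. sc (u x) x) = 0" using WW_ker T(3) spWW by simp
    moreover have "\<pi> (\<Sum>x\<in>T. sc (u x) x) = (\<Sum>x\<in>T. sc (u x) (\<pi> x))"
      using pi_sum[OF T(1), of id u] TF by simp
    moreover have "(\<Sum>x\<in>T. sc (u x) (\<pi> x)) = (\<Sum>x\<in>T \<inter> B. sc (u x) (\<pi> x)) + (\<Sum>x\<in>T - B. sc (u x) (\<pi> x))"
      using T(1) by (rule sum.Int_Diff)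
    moreover have "(\<Sum>x\<in>T \<inter> B. sc (u x) (\<pi> x)) = 0"
      using B(3) by (intro sum.neutral) (auto simp: RR_def)
    ultimately have p2: "(\<Sum>x\<in>T - B. sc (u x) (\<pi> x)) = 0" by simp
    define T2 where "T2 = {b \<in> B'. gl b \<in> T}"
    have T2eq: "T - B = gl ` T2"
    proof
      show "T - B \<subseteq> gl ` T2" using T(2) unfolding X_def G_def T2_def by auto
      show "gl ` T2 \<subseteq> T - B" using disj unfolding T2_def G_def by auto
    qed
    have injT2: "inj_on gl T2" using inj by (rule inj_on_subset) (auto simp: T2_def)
    have "(\<Sum>b\<in>T2. sc (u (gl b)) b) = (\<Sum>b\<in>T2. sc (u (gl b)) (\<pi> (gl b)))"
      by (intro sum.cong refl) (auto simp: T2_def gl)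
    also have "\<dots> = (\<Sum>x\<in>gl ` T2. sc (u x) (\<pi> x))"
      using sum.reindex[OF injT2, of "\<lambda>x. sc (u x) (\<pi> x)"] by simp
    also have "\<dots> = 0" using p2 T2eq by simp
    finally have "(\<Sum>b\<in>T2. sc ((u \<circ> gl) b) b) \<in> span_of {}" by (simp add: span_of_empty)
    moreover have "finite T2" "T2 \<subseteq> B'" using B'(1) by (auto simp: T2_def)
    ultimately have "\<forall>b\<in>T2. (u \<circ> gl) b = 0"
      using B'(4) unfolding indep_mod_def by blast
    then have u2: "\<forall>x\<in>T - B. u x = 0" using T2eq by auto
    then have "(\<Sum>x\<in>T - B. sc (u x) x) = 0" by simp
    then have "(\<Sum>x\<in>T \<inter> B. sc (u x) x) \<in> span_of WW" using T(3) split by simp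
    then have "\<forall>x\<in>T \<inter> B. u x = 0"
      using B(4) T(1) unfolding indep_mod_def by blast
    with u2 show "\<forall>x\<in>T. u x = 0" by blast
  qed
  obtain TT where TT: "finite TT" "card TT \<le> 19" "?F2 \<subseteq> SPT TT" using exists_T by blast
  have "SPT TT \<subseteq> vs.span (TT \<union> WW)"
    unfolding SPT_def WW_def using vs.span_superset[of Wset] by (intro vs.span_mono) auto
  then have "X \<subseteq> vs.span (TT \<union> WW)" using XF2 TT(3) by auto
  then have "card X \<le> card TT" by (rule indep_mod_card[OF fX indX TT(1)])
  then show ?thesis using cX TT(2) by simp
qed

end

theorem lemma2p9:
  fixes V :: "('i \<Rightarrow> 'a::field) set"
    and br :: "('i \<Rightarrow> 'a) \<Rightarrow> ('i \<Rightarrow> 'a) \<Rightarrow> ('i \<Rightarrow> 'a)"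
  assumes alg_closed: "\<forall>p :: 'a poly. degree p \<ge> 1 \<longrightarrow> (\<exists>x. poly p x = 0)"
    and char_ne_2: "(2::'a) \<noteq> 0"
  shows "\<not> (lie_algebra V br \<and> (\<exists>n. has_dim V n) \<and> nilpotent_lie V br \<and>
             has_dim (brk_span br V V) 3 \<and> has_dim (center V br) 1 \<and> s_inv_eq V br 5 \<and>
             quotient_iso V br (center V br)
               (lie_sum_carrier L58 A2) (lie_sum_br L58_br A2_br))"
proof
  assume H: "lie_algebra V br \<and> (\<exists>n. has_dim V n) \<and> nilpotent_lie V br \<and>
             has_dim (brk_span br V V) 3 \<and> has_dim (center V br) 1 \<and> s_inv_eq V br 5 \<and>
             quotient_iso V br (center V br)
               (lie_sum_carrier L58 A2) (lie_sum_br L58_br A2_br)"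
  obtain \<phi> where phi: "lie_hom V br (lie_sum_carrier L58 A2) (lie_sum_br L58_br A2_br) \<phi>"
      "\<phi> ` V = lie_sum_carrier L58 A2" "{x \<in> V. \<phi> x = 0} = center V br"
    using H unfolding quotient_iso_def by blast
  obtain n d where nd: "has_dim V n" "schur_mult_dim V br d"
      "int d = int ((n - 1) * (n - 2) div 2) + 1 - 5"
    using H unfolding s_inv_eq_def by blast
  obtain \<pi> where pi: "lie_hom free_lie nc_comm V br \<pi>" "\<pi> ` free_lie = V"
      "has_quot_dim ({p \<in> free_lie. \<pi> p = 0} \<inter> brk_span nc_comm free_lie free_lie)
          (brk_span nc_comm {p \<in> free_lie. \<pi> p = 0} free_lie) d"
    using nd(2) unfolding schur_mult_dim_def Let_def by blast
  interpret LS V br \<phi> \<pi>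
    using H phi pi char_ne_2 by unfold_locales auto
  have n8: "8 \<le> n" using dim_ge8[OF nd(1)] .
  have d16: "d + 3 \<le> 19" using main_bound[unfolded RR_def, OF pi(3)] H by blast
  have "7 * 6 \<le> (n - 1) * (n - 2)" using n8 by (intro mult_le_mono) auto
  then have "42 div 2 \<le> (n - 1) * (n - 2) div 2" by (intro div_le_mono) simp
  then have "(21::int) \<le> int ((n - 1) * (n - 2) div 2)" by simp
  then show False using nd(3) d16 by simp
qed


end
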